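(* For every type $\tau\in\mathbb{T}_C$, $|\bigcap\mathbb{P}(\tau)|\le|\tau|^2$, where $|\cdot|$ denotes the number of nodes in the syntax tree of a type.
   Context: Types $\mathbb{T}_C\ni\tau ::= a\mid\alpha\mid\omega\mid\tau_1\to\tau_2\mid\tau_1\cap\tau_2\mid c(\tau)$ ($a$ constants, $\alpha$ type variables, $c$ unary constructors). Paths: $\pi ::= a\mid\alpha\mid\sigma\to\pi\mid c(\omega)\mid c(\pi)$. $\mathbb{P}(a)=\{a\}$, $\mathbb{P}(\alpha)=\{\alpha\}$, $\mathbb{P}(\omega)=\emptyset$, $\mathbb{P}(\sigma\to\tau)=\{\sigma\to\pi\mid\pi\in\mathbb{P}(\tau)\}$, $\mathbb{P}(\sigma\cap\tau)=\mathbb{P}(\sigma)\cup\mathbb{P}(\tau)$, $\mathbb{P}(c(\tau))=\{c(\omega)\}$ if $\mathbb{P}(\tau)=\emptyset$, else $\{c(\pi)\mid\pi\in\mathbb{P}(\tau)\}$. $\bigcap\mathbb{P}(\tau)$ denotes the type $\pi_1\cap\cdots\cap\pi_n$ where $\mathbb{P}(\tau)=\{\pi_1,\ldots,\pi_n\}$, and $\omega$ if $\mathbb{P}(\tau)=\emptyset$. *)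

theory Defs
  imports Main
begin

datatype ('a, 'v, 'c) ty =
    Const 'a
  | TVar 'v
  | Omega
  | Arr "('a, 'v, 'c) ty" "('a, 'v, 'c) ty"
  | Inter "('a, 'v, 'c) ty" "('a, 'v, 'c) ty"
  | Con 'c "('a, 'v, 'c) ty"

fun tsize :: "('a, 'v, 'c) ty \<Rightarrow> nat" where
  "tsize (Const a) = 1"
| "tsize (TVar v) = 1"
| "tsize Omega = 1"
| "tsize (Arr s t) = 1 + tsize s + tsize t"
| "tsize (Inter s t) = 1 + tsize s + tsize t"
| "tsize (Con c t) = 1 + tsize t"

fun paths :: "('a, 'v, 'c) ty \<Rightarrow> ('a, 'v, 'c) ty set" where
  "paths (Const a) = {Const a}"
| "paths (TVar v) = {TVar v}"
| "paths Omega = {}"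
| "paths (Arr s t) = {Arr s p | p. p \<in> paths t}"
| "paths (Inter s t) = paths s \<union> paths t"
| "paths (Con c t) = (if paths t = {} then {Con c Omega} else {Con c p | p. p \<in> paths t})"

fun inter_list :: "('a, 'v, 'c) ty list \<Rightarrow> ('a, 'v, 'c) ty" where
  "inter_list [] = Omega"
| "inter_list [p] = p"
| "inter_list (p # ps) = Inter p (inter_list ps)"

definition bigcap_paths :: "('a, 'v, 'c) ty \<Rightarrow> ('a, 'v, 'c) ty" where
  "bigcap_paths t = inter_list (SOME ps. distinct ps \<and> set ps = paths t)"

end

theory Submission
  imports Defs
begin

lemma paths_finite: "finite (paths t)"
proof (induction t)
  case (Arr s t)
  have "{Arr s p | p. p \<in> paths t} = Arr s ` paths t" by auto
  then show ?case using Arr by simp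
next
  case (Con c t)
  have "{Con c p | p. p \<in> paths t} = Con c ` paths t" by auto
  then show ?case using Con by simp
qed auto

lemma paths_card: "card (paths t) \<le> tsize t"
proof (induction t)
  case (Arr s t)
  have "{Arr s p | p. p \<in> paths t} = Arr s ` paths t" by auto
  then show ?case using Arr card_image_le[OF paths_finite, of "Arr s" t] by simp
next
  case (Inter s t)
  then show ?case using card_Un_le[of "paths s" "paths t"] by simp
next
  case (Con c t)
  have "{Con c p | p. p \<in> paths t} = Con c ` paths t" by auto
  then show ?case using Con card_image_le[OF paths_finite, of "Con c" t] by simp
qed auto

definition f :: "('a, 'v, 'c) ty \<Rightarrow> nat" where
  "f t = (\<Sum>p\<in>paths t. tsize p + 1)"

lemma f_bound: "f t \<le> (tsize t)^2 + 1"
proof (induction t)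
  case (Arr s t)
  have e: "{Arr s p | p. p \<in> paths t} = Arr s ` paths t" by auto
  have "f (Arr s t) = (\<Sum>p\<in>paths t. tsize (Arr s p) + 1)"
    unfolding f_def by (simp add: e sum.reindex inj_on_def)
  also have "\<dots> = (\<Sum>p\<in>paths t. (tsize p + 1) + (1 + tsize s))"
    by (rule sum.cong) auto
  also have "\<dots> = f t + card (paths t) * (1 + tsize s)"
    unfolding f_def by (simp only: sum.distrib sum_constant) (simp add: algebra_simps)
  also have "\<dots> \<le> (tsize t)^2 + 1 + tsize t * (1 + tsize s)"
    using Arr paths_card[of t] by (intro add_mono mult_right_mono) auto
  also have "\<dots> \<le> (tsize (Arr s t))^2 + 1" by (simp add: power2_eq_square algebra_simps)
  finally show ?case .
next
  case (Inter s t)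
  have "f (Inter s t) \<le> f s + f t"
    unfolding f_def by (simp add: sum_Un_nat paths_finite)
  also have "\<dots> \<le> (tsize (Inter s t))^2 + 1" using Inter by (simp add: power2_eq_square algebra_simps)
  finally show ?case .
next
  case (Con c t)
  have ts: "tsize t \<ge> 1" by (cases t) auto
  show ?case
  proof (cases "paths t = {}")
    case True
    then have "f (Con c t) = 3" unfolding f_def by simp
    then show ?thesis using ts by (simp add: power2_eq_square algebra_simps)
  next
    case False
    have e: "{Con c p | p. p \<in> paths t} = Con c ` paths t" by auto
    have "f (Con c t) = (\<Sum>p\<in>paths t. tsize (Con c p) + 1)"
      unfolding f_def using False by (simp add: e sum.reindex inj_on_def)
    also have "\<dots> = (\<Sum>p\<in>paths t. (tsize p + 1) + 1)"
      by (rule sum.cong) auto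
    also have "\<dots> = f t + card (paths t)"
      unfolding f_def by (simp only: sum.distrib sum_constant) simp
    also have "\<dots> \<le> (tsize t)^2 + 1 + tsize t"
      using Con paths_card[of t] by simp
    also have "\<dots> \<le> (tsize (Con c t))^2 + 1" by (simp add: power2_eq_square algebra_simps)
    finally show ?thesis .
  qed
qed (auto simp: f_def)

lemma inter_list_size: "ps \<noteq> [] \<Longrightarrow> tsize (inter_list ps) + 1 \<le> sum_list (map (\<lambda>p. tsize p + 1) ps)"
  by (induction ps rule: inter_list.induct) auto

theorem lemma4p9:
  fixes \<tau> :: "('a, 'v, 'c) ty"
  shows "tsize (bigcap_paths \<tau>) \<le> (tsize \<tau>)^2"
proof -
  define ps where "ps = (SOME ps. distinct ps \<and> set ps = paths \<tau>)"
  have ex: "\<exists>ps. distinct ps \<and> set ps = paths \<tau>"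
    using finite_distinct_list[OF paths_finite] by blast
  have ps: "distinct ps" "set ps = paths \<tau>"
    using someI_ex[OF ex] unfolding ps_def by auto
  have ts: "tsize \<tau> \<ge> 1" by (cases \<tau>) auto
  show ?thesis
  proof (cases "ps = []")
    case True
    then show ?thesis using ts unfolding bigcap_paths_def ps_def[symmetric]
      by (simp add: power2_eq_square)
  next
    case False
    have "tsize (inter_list ps) + 1 \<le> sum_list (map (\<lambda>p. tsize p + 1) ps)"
      using inter_list_size[OF False] .
    also have "\<dots> = f \<tau>" unfolding f_def using ps
      by (metis sum_list_distinct_conv_sum_set)
    also have "\<dots> \<le> (tsize \<tau>)^2 + 1" by (rule f_bound)
    finally show ?thesis unfolding bigcap_paths_def ps_def[symmetric] by simp
  qed
qed

end
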